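(* For every prime $p$ and $n\geq1$, the pseudovariety $\llbracket\mathbb{Z}_{p^n}\rrbracket$ is join irreducible and \[\operatorname{Excl}(\mathbb{Z}_{p^n})=\llbracket(x^{(p')^\omega})^{p^{n-1}}\approx x^\omega\rrbracket.\]
   Context: $\mathbb{Z}_m$ is the cyclic group of order $m$. A pseudovariety is a class of finite semigroups closed under finite direct products, subsemigroups and homomorphic images; $\llbracket S\rrbracket$ is the pseudovariety generated by $S$, and $\llbracket\Sigma\rrbracket$ the pseudovariety defined by pseudoidentities $\Sigma$. A pseudovariety $\mathbf{V}$ is join irreducible if for every set $\mathscr{X}$ of pseudovarieties, $\mathbf{V}\subseteq\bigvee\mathscr{X}$ implies $\mathbf{V}\subseteq\mathbf{X}$ for some $\mathbf{X}\in\mathscr{X}$; $\operatorname{Excl}(S)$ is the class of finite semigroups $T$ with $S\notin\llbracket T\rrbracket$. $x^\omega$ is the idempotent power. $p'$ denotes the set of all primes other than $p$; for a set $\pi=\{p_1,p_2,\dots\}$ of primes, $x^{\pi^\omega}$ is the limit in the free profinite semigroup on $\{x\}$ of $x^{(p_1\cdots p_k)^{k!}}$; for an element $s$ of a finite semigroup, $s^{\pi^\omega}$ generates the $\pi'$-primary component of the cyclic group generated by $s^{\omega+1}$ (so $s^{(p')^\omega}$ generates its $p$-primary component). *)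

theory Defs
  imports "HOL-Computational_Algebra.Primes" "HOL-Library.Infinite_Set" "HOL-Library.Nat_Bijection"
begin

text \<open>Finite semigroups are represented on the universe nat: a pair (carrier, multiplication).
  Every finite semigroup is isomorphic to one of this form, and all classes below are
  closed under isomorphism (via homomorphic images), so this loses no generality.\<close>

type_synonym sg = "nat set \<times> (nat \<Rightarrow> nat \<Rightarrow> nat)"

definition car :: "sg \<Rightarrow> nat set" where "car S = fst S"
definition mul :: "sg \<Rightarrow> nat \<Rightarrow> nat \<Rightarrow> nat" where "mul S = snd S"

definition fin_sg :: "sg \<Rightarrow> bool" where
  "fin_sg S \<longleftrightarrow> finite (car S) \<and> car S \<noteq> {}
     \<and> (\<forall>x\<in>car S. \<forall>y\<in>car S. mul S x y \<in> car S)
     \<and> (\<forall>x\<in>car S. \<forall>y\<in>car S. \<forall>z\<in>car S. mul S (mul S x y) z = mul S x (mul S y z))"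

definition FinSG :: "sg set" where "FinSG = {S. fin_sg S}"

definition sg_prod :: "sg \<Rightarrow> sg \<Rightarrow> sg" where
  "sg_prod S T = ((\<lambda>(a,b). prod_encode (a,b)) ` (car S \<times> car T),
     (\<lambda>u v. case (prod_decode u, prod_decode v) of ((a,b),(c,d)) \<Rightarrow>
        prod_encode (mul S a c, mul T b d)))"

definition is_hom_onto :: "(nat \<Rightarrow> nat) \<Rightarrow> sg \<Rightarrow> sg \<Rightarrow> bool" where
  "is_hom_onto f S T \<longleftrightarrow> f ` car S = car T
     \<and> (\<forall>x\<in>car S. \<forall>y\<in>car S. f (mul S x y) = mul T (f x) (f y))"

definition pseudovariety :: "sg set \<Rightarrow> bool" where
  "pseudovariety V \<longleftrightarrow> V \<subseteq> FinSG \<and> V \<noteq> {}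
     \<and> (\<forall>S\<in>V. \<forall>T\<in>V. sg_prod S T \<in> V)
     \<and> (\<forall>S\<in>V. \<forall>A. A \<subseteq> car S \<and> A \<noteq> {} \<and> (\<forall>x\<in>A. \<forall>y\<in>A. mul S x y \<in> A)
            \<longrightarrow> (A, mul S) \<in> V)
     \<and> (\<forall>S\<in>V. \<forall>T\<in>FinSG. (\<exists>f. is_hom_onto f S T) \<longrightarrow> T \<in> V)"

definition pv_gen :: "sg set \<Rightarrow> sg set" where
  "pv_gen C = \<Inter>{V. pseudovariety V \<and> C \<subseteq> V}"

definition pv_join :: "sg set set \<Rightarrow> sg set" where
  "pv_join X = pv_gen (\<Union>X)"

definition join_irreducible :: "sg set \<Rightarrow> bool" where
  "join_irreducible V \<longleftrightarrow>
     (\<forall>X. (\<forall>W\<in>X. pseudovariety W) \<longrightarrow> V \<subseteq> pv_join X \<longrightarrow> (\<exists>W\<in>X. V \<subseteq> W))"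

definition Excl :: "sg \<Rightarrow> sg set" where
  "Excl S = {T \<in> FinSG. S \<notin> pv_gen {T}}"

definition Zm :: "nat \<Rightarrow> sg" where
  "Zm m = ({0..<m}, \<lambda>a b. (a + b) mod m)"

text \<open>Powers s^k for k \<ge> 1 (k = 0 gives s as well, never used).\<close>
definition spow :: "sg \<Rightarrow> nat \<Rightarrow> nat \<Rightarrow> nat" where
  "spow S s k = ((mul S s) ^^ (k - 1)) s"

definition omega_pow :: "sg \<Rightarrow> nat \<Rightarrow> nat" where
  "omega_pow S s = (THE e. (\<exists>k\<ge>1. e = spow S s k) \<and> mul S e e = e)"

text \<open>For a set of primes \<pi> = {p_1 < p_2 < ...} (infinite), s^(\<pi>^\<omega>) is the limit of
  s^((p_1 \<cdots> p_k)^(k!)); in a finite (discrete) semigroup this means the eventual value.\<close>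
definition pi_exp :: "nat set \<Rightarrow> nat \<Rightarrow> nat" where
  "pi_exp \<pi> k = (\<Prod>i<k. enumerate \<pi> i) ^ fact k"

definition pi_omega_pow :: "nat set \<Rightarrow> sg \<Rightarrow> nat \<Rightarrow> nat" where
  "pi_omega_pow \<pi> S s = (THE y. \<forall>\<^sub>F k in sequentially. spow S s (pi_exp \<pi> k) = y)"

definition primes_except :: "nat \<Rightarrow> nat set" where
  "primes_except p = {q. prime q \<and> q \<noteq> p}"

definition pv_thm_eq :: "nat \<Rightarrow> nat \<Rightarrow> sg set" where
  "pv_thm_eq p n = {T \<in> FinSG. \<forall>s\<in>car T.
      spow T (pi_omega_pow (primes_except p) T s) (p ^ (n - 1)) = omega_pow T s}"

end

theory Submission
  imports Defs "HOL-Number_Theory.Number_Theory"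
begin

lemma spow_1[simp]: "spow S s (Suc 0) = s" by (simp add: spow_def)
lemma spow_SS: "spow S s (Suc (Suc j)) = mul S s (spow S s (Suc j))"
  by (simp add: spow_def)

lemma fin_sgD:
  assumes "fin_sg S"
  shows "finite (car S)" "car S \<noteq> {}"
    "\<And>x y. x\<in>car S \<Longrightarrow> y\<in>car S \<Longrightarrow> mul S x y \<in> car S"
    "\<And>x y z. x\<in>car S \<Longrightarrow> y\<in>car S \<Longrightarrow> z\<in>car S \<Longrightarrow> mul S (mul S x y) z = mul S x (mul S y z)"
  using assms unfolding fin_sg_def by blast+

lemma spow_car:
  assumes "fin_sg S" "s \<in> car S"
  shows "spow S s k \<in> car S"
proof -
  have "spow S s (Suc j) \<in> car S" for j
    by (induction j) (auto simp: spow_SS fin_sgD[OF assms(1)] assms(2))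
  thus ?thesis by (cases k) (auto simp: assms spow_def)
qed

lemma spow_add:
  assumes "fin_sg S" "s \<in> car S" "k \<ge> 1" "l \<ge> 1"
  shows "spow S s (k + l) = mul S (spow S s k) (spow S s l)"
proof -
  have "spow S s (Suc j + l) = mul S (spow S s (Suc j)) (spow S s l)" for j
  proof (induction j)
    case 0
    then show ?case using assms(4) by (cases l) (auto simp: spow_SS)
  next
    case (Suc j)
    have "spow S s (Suc (Suc j) + l) = mul S s (spow S s (Suc j + l))"
      using assms(4) by (cases l) (auto simp: spow_SS)
    also have "\<dots> = mul S s (mul S (spow S s (Suc j)) (spow S s l))" using Suc by simp
    also have "\<dots> = mul S (mul S s (spow S s (Suc j))) (spow S s l)"
      using fin_sgD(4)[OF assms(1) assms(2) spow_car[OF assms(1,2)] spow_car[OF assms(1,2)]] by simp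
    finally show ?case by (simp add: spow_SS)
  qed
  thus ?thesis using assms(3) by (cases k) auto
qed

lemma spow_mult:
  assumes "fin_sg S" "s \<in> car S" "k \<ge> 1" "l \<ge> 1"
  shows "spow S (spow S s k) l = spow S s (k * l)"
proof -
  have "spow S (spow S s k) (Suc j) = spow S s (k * Suc j)" for j
  proof (induction j)
    case 0 then show ?case by simp
  next
    case (Suc j)
    have "spow S (spow S s k) (Suc (Suc j)) = mul S (spow S s k) (spow S s (k * Suc j))"
      using Suc by (simp add: spow_SS)
    also have "\<dots> = spow S s (k + k * Suc j)"
      using spow_add[OF assms(1,2,3), of "k * Suc j"] assms(3) by simp
    finally show ?case by (simp add: algebra_simps)
  qed
  thus ?thesis using assms(4) by (cases l) auto
qed

lemma spow_hom:
  assumes "fin_sg S" "s \<in> car S" "is_hom_onto f S T"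
  shows "f (spow S s k) = spow T (f s) k"
proof -
  have "f (spow S s (Suc j)) = spow T (f s) (Suc j)" for j
    apply (induction j)
    using assms spow_car[OF assms(1,2)] by (auto simp: spow_SS is_hom_onto_def)
  thus ?thesis by (cases k) (auto simp: spow_def)
qed

lemma spow_sub: "spow (A, mul S) s k = spow S s k"
  by (simp add: spow_def mul_def)

lemma mul_pair[simp]: "mul (A, m) = m" by (simp add: mul_def)
lemma car_pair[simp]: "car (A, m) = A" by (simp add: car_def)

lemma mul_prod:
  "mul (sg_prod S T) (prod_encode (a,b)) (prod_encode (c,d)) = prod_encode (mul S a c, mul T b d)"
  by (simp add: sg_prod_def)

lemma spow_prod:
  "spow (sg_prod S T) (prod_encode (a,b)) k = prod_encode (spow S a k, spow T b k)"
proof -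
  have "spow (sg_prod S T) (prod_encode (a,b)) (Suc j) = prod_encode (spow S a (Suc j), spow T b (Suc j))" for j
    by (induction j) (auto simp: spow_SS mul_prod)
  thus ?thesis by (cases k) (auto simp: spow_def)
qed

lemma periodic:
  assumes "fin_sg S" "s \<in> car S" "i \<ge> 1" "spow S s (i + q) = spow S s i" "m \<ge> i"
  shows "spow S s (m + t * q) = spow S s m"
proof -
  have 1: "spow S s (m + q) = spow S s m" if "m \<ge> i" for m
  proof (cases "m = i")
    case True then show ?thesis using assms by simp
  next
    case False
    then have "m = (m - i) + i" "m - i \<ge> 1" using that by auto
    then have "spow S s (m + q) = mul S (spow S s (m - i)) (spow S s (i + q))"
      using spow_add[OF assms(1,2), of "m - i" "i + q"] assms(3)
      by (metis add.assoc le_add1 order_trans)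
    also have "\<dots> = spow S s m" using assms(4) spow_add[OF assms(1,2), of "m - i" i] assms(3) \<open>m = _\<close> \<open>m - i \<ge> 1\<close>
      by simp
    finally show ?thesis .
  qed
  show ?thesis
  proof (induction t)
    case 0 then show ?case by simp
  next
    case (Suc t)
    have "spow S s (m + Suc t * q) = spow S s ((m + t * q) + q)" by (simp add: algebra_simps)
    also have "\<dots> = spow S s (m + t*q)" using 1 assms(5) by simp
    finally show ?case using Suc by simp
  qed
qed


lemma exists_rep:
  assumes "fin_sg S" "s \<in> car S"
  shows "\<exists>i q. i \<ge> 1 \<and> q \<ge> 1 \<and> spow S s (i + q) = spow S s i"
proof -
  let ?c = "card (car S)"
  let ?g = "spow S s"
  have "\<not> inj_on ?g {1..?c+1}"
  proof
    assume "inj_on ?g {1..?c+1}"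
    then have "card (?g ` {1..?c+1}) = ?c + 1" by (simp add: card_image)
    moreover have "card (?g ` {1..?c+1}) \<le> ?c"
      using card_mono[OF fin_sgD(1)[OF assms(1)]] spow_car[OF assms] by blast
    ultimately show False by simp
  qed
  then obtain k l where kl: "k \<in> {1..?c+1}" "l \<in> {1..?c+1}" "k \<noteq> l" "?g k = ?g l"
    unfolding inj_on_def by blast
  show ?thesis
  proof (cases "k < l")
    case True
    then show ?thesis using kl by (intro exI[of _ k] exI[of _ "l - k"]) auto
  next
    case False
    then show ?thesis using kl by (intro exI[of _ l] exI[of _ "k - l"]) auto
  qed
qed

lemma cyc_struct:
  assumes "fin_sg S" "s \<in> car S"
  shows "\<exists>i r. i \<ge> 1 \<and> r \<ge> 1 \<and>
     (\<forall>k l. k \<ge> i \<longrightarrow> l \<ge> i \<longrightarrow> (spow S s k = spow S s l \<longleftrightarrow> k mod r = l mod r))"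
proof -
  obtain i q where iq: "i \<ge> 1" "q \<ge> 1" "spow S s (i + q) = spow S s i"
    using exists_rep[OF assms] by blast
  define r where "r = (LEAST r. r \<ge> 1 \<and> spow S s (i + r) = spow S s i)"
  have r: "r \<ge> 1" "spow S s (i + r) = spow S s i"
    using LeastI[of "\<lambda>r. r \<ge> 1 \<and> spow S s (i + r) = spow S s i" q] iq unfolding r_def by auto
  have rmin: "r \<le> r'" if "r' \<ge> 1" "spow S s (i + r') = spow S s i" for r'
    using Least_le[of "\<lambda>r. r \<ge> 1 \<and> spow S s (i + r) = spow S s i" r'] that unfolding r_def by auto
  have per: "spow S s (m + t * r) = spow S s m" if "m \<ge> i" for m t
    using periodic[OF assms iq(1) r(2) that] .
  have main: "spow S s k = spow S s l \<longleftrightarrow> k mod r = l mod r" if "k \<ge> i" "l \<ge> i" "k \<le> l" for k l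
  proof
    assume "k mod r = l mod r"
    then have "r dvd l - k" using mod_eq_dvd_iff_nat[OF \<open>k \<le> l\<close>] by metis
    then obtain t where "l - k = r * t" by blast
    then have "l = k + t * r" using \<open>k \<le> l\<close> by (simp add: algebra_simps)
    then show "spow S s k = spow S s l" using per[OF that(1)] by simp
  next
    assume eq: "spow S s k = spow S s l"
    define d where "d = l - k"
    have kd: "spow S s (k + d) = spow S s k" using eq that unfolding d_def by simp
    have "spow S s (i + d) = spow S s (i + d + k * r)" using per[of "i + d" k] by simp
    also have "\<dots> = spow S s ((i + k * r) + 1 * d)" by (simp add: algebra_simps)
    also have "\<dots> = spow S s (i + k * r)"
    proof -
      have "i + k * r \<ge> k" using r(1) by (metis le_add2 mult_le_mono2 mult.commute mult_1_right order_trans)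
      then show ?thesis using periodic[OF assms _ kd, of "i + k * r" 1] that iq(1) by simp
    qed
    also have "\<dots> = spow S s i" using per[of i k] by simp
    finally have id: "spow S s (i + d) = spow S s i" .
    have "spow S s (i + d mod r) = spow S s (i + d mod r + (d div r) * r)" using per[of "i + d mod r" "d div r"] by simp
    also have "\<dots> = spow S s (i + d)" by (metis add.assoc mod_div_mult_eq)
    finally have "spow S s (i + d mod r) = spow S s i" using id by simp
    moreover have "d mod r < r" using r(1) by simp
    ultimately have "d mod r = 0" using rmin[of "d mod r"] by (meson leD less_one not_le)
    then have "r dvd l - k" unfolding d_def by auto
    then show "k mod r = l mod r" using mod_eq_dvd_iff_nat[OF \<open>k \<le> l\<close>] by metis
  qed
  have "\<forall>k l. k \<ge> i \<longrightarrow> l \<ge> i \<longrightarrow> (spow S s k = spow S s l \<longleftrightarrow> k mod r = l mod r)"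
  proof (intro allI impI)
    fix k l assume "k \<ge> i" "l \<ge> i"
    then show "(spow S s k = spow S s l \<longleftrightarrow> k mod r = l mod r)"
      using main[of k l] main[of l k] by (cases "k \<le> l") auto
  qed
  then show ?thesis using iq(1) r(1) by blast
qed


definition goodD :: "nat \<Rightarrow> nat \<Rightarrow> sg \<Rightarrow> nat \<Rightarrow> bool" where
  "goodD p n S s \<longleftrightarrow> (\<exists>i K. i \<ge> 1 \<and> \<not> p dvd K \<and> spow S s (i + p^(n-1)*K) = spow S s i)"

lemma pow_decomp:
  fixes p r :: nat
  assumes "prime p" "r \<ge> 1"
  obtains a K where "r = p^a * K" "\<not> p dvd K"
proof -
  have "r \<noteq> 0" "\<not> is_unit p" using assms by auto
  then show ?thesis using multiplicity_decompose'[of r p] that by blast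
qed

lemma pn_dvd_iff:
  fixes p :: nat
  assumes "prime p" "\<not> p dvd K" "n \<ge> 1"
  shows "p^n dvd p^a * K \<longleftrightarrow> n \<le> a"
proof
  assume "n \<le> a" then show "p^n dvd p^a * K" by (simp add: le_imp_power_dvd)
next
  assume h: "p^n dvd p^a * K"
  show "n \<le> a"
  proof (rule ccontr)
    assume "\<not> n \<le> a"
    then have "p^(Suc a) dvd p^n" using le_imp_power_dvd[of "Suc a" n p] by simp
    then have "p^a * p dvd p^a * K" using h dvd_trans by (metis power_Suc2)
    then have "p dvd K" using assms(1) by (simp add: prime_gt_0_nat)
    then show False using assms(2) by simp
  qed
qed

context
  fixes S :: sg and s i r p n :: nat
  assumes S: "fin_sg S" "s \<in> car S" and ir: "i \<ge> 1" "r \<ge> 1"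
    and eqv: "\<forall>k l. k \<ge> i \<longrightarrow> l \<ge> i \<longrightarrow> (spow S s k = spow S s l \<longleftrightarrow> k mod r = l mod r)"
    and pn: "prime p" "n \<ge> 1"
begin

lemma goodD_iff: "goodD p n S s \<longleftrightarrow> \<not> p^n dvd r"
proof
  assume "goodD p n S s"
  then obtain i' K where iK: "i' \<ge> 1" "\<not> p dvd K" "spow S s (i' + p^(n-1)*K) = spow S s i'"
    unfolding goodD_def by blast
  define k where "k = max i i'"
  have "spow S s (k + 1 * (p^(n-1)*K)) = spow S s k"
    by (rule periodic[OF S iK(1) iK(3)]) (simp add: k_def)
  then have "(k + p^(n-1)*K) mod r = k mod r" using eqv k_def by auto
  then have "r dvd p^(n-1)*K" by (metis mod_add_self2 mod_eq_dvd_iff_nat le_add1 add_diff_cancel_left')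
  show "\<not> p^n dvd r"
  proof
    assume "p^n dvd r"
    then have "p^(n-1) * p dvd p^(n-1) * K" using \<open>r dvd _\<close> pn(2)
      by (metis Suc_diff_1 dvd_trans le_less_trans less_one not_le power_Suc2 zero_less_one)
    then have "p dvd K" using pn(1) by (simp add: prime_gt_0_nat)
    then show False using iK(2) by simp
  qed
next
  assume h: "\<not> p^n dvd r"
  obtain a K where aK: "r = p^a * K" "\<not> p dvd K" using pow_decomp[OF pn(1) ir(2)] by blast
  have "a < n" using h pn_dvd_iff[OF pn(1) aK(2) pn(2)] aK(1) by auto
  then have "p^a dvd p^(n-1)" by (simp add: le_imp_power_dvd)
  then have "r dvd p^(n-1)*K" using aK(1) by simp
  then have "(i + p^(n-1)*K) mod r = i mod r" by auto
  then have "spow S s (i + p^(n-1)*K) = spow S s i" using eqv by simp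
  then show "goodD p n S s" unfolding goodD_def using ir(1) aK(2) by blast
qed

lemma hom_construct:
  assumes "p^n dvd r"
  shows "\<exists>A f. A \<subseteq> car S \<and> A \<noteq> {} \<and> (\<forall>x\<in>A. \<forall>y\<in>A. mul S x y \<in> A)
             \<and> is_hom_onto f (A, mul S) (Zm (p^n))"
proof -
  define A where "A = {spow S s k | k. k \<ge> i}"
  define f where "f x = (SOME k. k \<ge> i \<and> x = spow S s k) mod p^n" for x
  have fval: "f (spow S s k) = k mod p^n" if "k \<ge> i" for k
  proof -
    have ex: "\<exists>k'. k' \<ge> i \<and> spow S s k = spow S s k'" using that by blast
    define k' where "k' = (SOME k'. k' \<ge> i \<and> spow S s k = spow S s k')"
    have k': "k' \<ge> i" "spow S s k = spow S s k'" using someI_ex[OF ex] unfolding k'_def by auto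
    then have "k mod r = k' mod r" using eqv that by blast
    then have "k mod p^n = k' mod p^n" using assms by (metis mod_mod_cancel)
    then show ?thesis unfolding f_def k'_def by simp
  qed
  have sub: "A \<subseteq> car S" unfolding A_def using spow_car[OF S] by blast
  have ne: "A \<noteq> {}" unfolding A_def by blast
  have mulA: "mul S (spow S s k) (spow S s l) = spow S s (k + l)" if "k \<ge> i" "l \<ge> i" for k l
    using spow_add[OF S, of k l] that ir(1) by simp
  have cl: "\<forall>x\<in>A. \<forall>y\<in>A. mul S x y \<in> A"
    unfolding A_def using mulA by fastforce
  have pn0: "p^n > 0" using pn(1) by (simp add: prime_gt_0_nat)
  have img: "f ` A = {0..<p^n}"
  proof
    show "f ` A \<subseteq> {0..<p^n}" unfolding A_def using fval pn0 by auto
    show "{0..<p^n} \<subseteq> f ` A"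
    proof
      fix j assume "j \<in> {0..<p^n}"
      have "i \<le> i * p^n" using pn0 by (simp add: Suc_leI)
      then have ge: "i \<le> i * p^n + j" by linarith
      have "j < p^n" using \<open>j \<in> _\<close> by simp
      then have "f (spow S s (i * p^n + j)) = j" using fval[OF ge] by simp
      moreover have "spow S s (i * p^n + j) \<in> A" unfolding A_def using ge by blast
      ultimately show "j \<in> f ` A" by force
    qed
  qed
  have hom: "\<forall>x\<in>A. \<forall>y\<in>A. f (mul S x y) = mul (Zm (p^n)) (f x) (f y)"
    unfolding A_def Zm_def using mulA fval by (auto simp: mod_add_eq)
  have "is_hom_onto f (A, mul S) (Zm (p^n))"
    unfolding is_hom_onto_def using img hom by (simp add: Zm_def car_def)
  then show ?thesis using sub ne cl by blast
qed

end

lemma dvd_pow_radical: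
  fixes K P :: nat
  shows "K \<noteq> 0 \<Longrightarrow> (\<And>q. prime q \<Longrightarrow> q dvd K \<Longrightarrow> q dvd P) \<Longrightarrow> K dvd P ^ K"
proof (induction K rule: less_induct)
  case (less K)
  show ?case
  proof (cases "K = 1")
    case True then show ?thesis by simp
  next
    case False
    then obtain q where q: "prime q" "q dvd K" using prime_factor_nat by blast
    then obtain K' where K': "K = q * K'" by blast
    have "K' \<noteq> 0" using less.prems(1) K' by auto
    have q2: "q \<ge> 2" using q(1) prime_ge_2_nat by blast
    have "K' < K" using K' q2 \<open>K' \<noteq> 0\<close> by simp
    have "q dvd P" using less.prems(2) q by blast
    moreover have "K' dvd P ^ K'"
      using less.IH[OF \<open>K' < K\<close> \<open>K' \<noteq> 0\<close>] less.prems(2) K' by (metis dvd_mult)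
    ultimately have "q * K' dvd P * P ^ K'" by (rule mult_dvd_mono)
    then have "K dvd P ^ Suc K'" using K' by simp
    moreover have "Suc K' \<le> K" using \<open>K' < K\<close> by simp
    ultimately show ?thesis by (meson dvd_trans le_imp_power_dvd)
  qed
qed

context
  fixes p :: nat
  assumes p: "prime p"
begin

definition "PP = primes_except p"
definition "E j = enumerate PP j"
definition "Pk k = (\<Prod>j<k. E j)"

lemma PP_inf: "infinite PP"
proof
  assume "finite PP"
  then have "finite (PP \<union> {p})" by simp
  moreover have "{q::nat. prime q} \<subseteq> PP \<union> {p}" unfolding PP_def primes_except_def by auto
  ultimately show False using primes_infinite finite_subset by blast
qed

lemma E_in: "prime (E j)" "E j \<noteq> p"
  using enumerate_in_set[OF PP_inf, of j] unfolding E_def PP_def primes_except_def by auto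

lemma Pk_pos: "Pk k > 0"
  unfolding Pk_def using E_in(1) prime_gt_0_nat by (simp add: prod_pos)

lemma Pk_coprime: "coprime (Pk k) (p^a)"
proof -
  have "coprime (Pk k) p" unfolding Pk_def
    by (rule prod_coprime_left) (metis E_in primes_coprime p)
  then show ?thesis by simp
qed

lemma pi_exp_eq: "pi_exp (primes_except p) k = Pk k ^ fact k"
  unfolding pi_exp_def Pk_def E_def PP_def by simp

lemma ev_ge: "eventually (\<lambda>k. pi_exp (primes_except p) k \<ge> i) sequentially"
proof -
  have "pi_exp (primes_except p) k \<ge> i" if "k \<ge> max i 1" for k
  proof -
    have "E 0 dvd Pk k" unfolding Pk_def using that by (intro dvd_prodI) auto
    then have "E 0 \<le> Pk k" using Pk_pos by (simp add: dvd_imp_le)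
    then have "2 \<le> Pk k" using prime_ge_2_nat[OF E_in(1)[of 0]] by linarith
    then have "2 ^ fact k \<le> Pk k ^ fact k" by (rule power_mono) simp
    moreover have "fact k < (2::nat) ^ fact k" by simp
    moreover have "k \<le> fact k" by (rule fact_ge_self)
    ultimately show ?thesis using that pi_exp_eq[of k] by linarith
  qed
  then show ?thesis unfolding eventually_sequentially by blast
qed

lemma ev_dvd:
  assumes "\<not> p dvd K"
  shows "eventually (\<lambda>k. K dvd pi_exp (primes_except p) k) sequentially"
proof -
  have K0: "K \<noteq> 0" using assms by (metis dvd_0_right)
  have "K dvd pi_exp (primes_except p) k" if "k \<ge> Suc K" for k
  proof -
    have "q dvd Pk k" if "prime q" "q dvd K" for q
    proof -
      have "q \<noteq> p" using that assms by auto
      then have "q \<in> PP" unfolding PP_def primes_except_def using that by auto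
      then obtain j where j: "q = E j" using range_enumerate[OF PP_inf] unfolding E_def by blast
      have "j \<le> E j" unfolding E_def by (rule strict_mono_imp_increasing[OF strict_mono_enumerate[OF PP_inf]])
      moreover have "q \<le> K" using that K0 by (simp add: dvd_imp_le)
      ultimately have "j < k" using j \<open>k \<ge> Suc K\<close> by linarith
      then show ?thesis unfolding Pk_def j by (intro dvd_prodI) auto
    qed
    then have "K dvd Pk k ^ K" using dvd_pow_radical K0 by blast
    moreover have "K \<le> fact k" using fact_ge_self[of k] that by linarith
    then have "Pk k ^ K dvd Pk k ^ fact k" by (rule le_imp_power_dvd)
    ultimately show ?thesis using pi_exp_eq[of k] dvd_trans by metis
  qed
  then show ?thesis unfolding eventually_sequentially by blast
qed

lemma ev_cong: "eventually (\<lambda>k. [pi_exp (primes_except p) k = 1] (mod p^a)) sequentially"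
proof -
  let ?t = "totient (p^a)"
  have t0: "?t \<ge> 1" using p by (simp add: prime_gt_0_nat Suc_leI)
  have "[pi_exp (primes_except p) k = 1] (mod p^a)" if kt: "k \<ge> ?t" for k
  proof -
    have e: "[Pk k ^ ?t = 1] (mod p^a)" using euler_theorem[OF Pk_coprime] .
    obtain m where m: "fact k = ?t * m" using dvd_fact[OF t0 kt] by blast
    have "[(Pk k ^ ?t) ^ m = 1 ^ m] (mod p^a)" by (rule cong_pow[OF e])
    then show ?thesis using pi_exp_eq m by (simp add: power_mult)
  qed
  then show ?thesis unfolding eventually_sequentially by blast
qed

end

context
  fixes S :: sg and s i r p n :: nat
  assumes S: "fin_sg S" "s \<in> car S" and ir: "i \<ge> 1" "r \<ge> 1"
    and eqv: "\<forall>k l. k \<ge> i \<longrightarrow> l \<ge> i \<longrightarrow> (spow S s k = spow S s l \<longleftrightarrow> k mod r = l mod r)"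
    and pn: "prime p" "n \<ge> 1"
begin

lemma omega_eq: "omega_pow S s = spow S s (i * r)"
  unfolding omega_pow_def
proof (rule the_equality)
  have ir1: "i * r \<ge> 1" using ir by simp
  have ir2: "i * r \<ge> i" using ir by simp
  have "mul S (spow S s (i*r)) (spow S s (i*r)) = spow S s (i*r + i*r)"
    using spow_add[OF S ir1 ir1] by simp
  also have "\<dots> = spow S s (i*r)"
  proof -
    have "(i*r + i*r) mod r = (i*r) mod r" by simp
    moreover have "i*r + i*r \<ge> i" using ir2 by linarith
    ultimately show ?thesis using eqv ir2 by blast
  qed
  finally show "(\<exists>k\<ge>1. spow S s (i * r) = spow S s k) \<and>
      mul S (spow S s (i * r)) (spow S s (i * r)) = spow S s (i * r)" using ir1 by blast
next
  fix e assume h: "(\<exists>k\<ge>1. e = spow S s k) \<and> mul S e e = e"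
  then obtain k where k: "k \<ge> 1" "e = spow S s k" "mul S e e = e" by blast
  have jk: "spow S s (Suc j * k) = e" for j
  proof (induction j)
    case 0 then show ?case using k by simp
  next
    case (Suc j)
    have "spow S s (Suc (Suc j) * k) = spow S s (k + Suc j * k)" by (simp add: algebra_simps)
    also have "\<dots> = mul S (spow S s k) (spow S s (Suc j * k))"
      using spow_add[OF S k(1), of "Suc j * k"] k(1) by simp
    finally show ?case using Suc k by simp
  qed
  have a: "i * k \<ge> i" using k(1) by simp
  have b: "2 * i * k \<ge> i" using k(1) by simp
  have e1: "spow S s (i * k) = e" using jk[of "i - 1"] ir(1) by simp
  have e2: "spow S s (2 * i * k) = e" using jk[of "2 * i - 1"] ir(1) by simp
  have "(2 * i * k) mod r = (i * k) mod r" using eqv a b e1 e2 by metis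
  then have "r dvd 2 * i * k - i * k" using mod_eq_dvd_iff_nat[of "i*k" "2*i*k" r] by simp
  then have "r dvd i * k" by simp
  then have "(i * k) mod r = (i * r) mod r" by simp
  then have "spow S s (i * k) = spow S s (i * r)" using eqv a ir by simp
  then show "e = spow S s (i * r)" using e1 by simp
qed

lemma pvcond_iff:
  "spow S (pi_omega_pow (primes_except p) S s) (p^(n-1)) = omega_pow S s \<longleftrightarrow> \<not> p^n dvd r"
proof -
  let ?N = "pi_exp (primes_except p)"
  obtain a K where aK: "r = p^a * K" "\<not> p dvd K" using pow_decomp[OF pn(1) ir(2)] by blast
  have "eventually (\<lambda>k. ?N k \<ge> i \<and> K dvd ?N k \<and> [?N k = 1] (mod p^a)) sequentially"
    by (intro eventually_conj ev_ge[OF pn(1)] ev_dvd[OF pn(1) aK(2)] ev_cong[OF pn(1)])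
  then obtain k0 where k0: "\<And>k. k \<ge> k0 \<Longrightarrow> ?N k \<ge> i \<and> K dvd ?N k \<and> [?N k = 1] (mod p^a)"
    unfolding eventually_sequentially by blast
  define c where "c = ?N k0"
  have c: "c \<ge> i" "K dvd c" "[c = 1] (mod p^a)" using k0[of k0] unfolding c_def by auto
  have cop: "coprime (p^a) K" using aK(2) pn(1) by (simp add: prime_imp_coprime)
  have Nc: "spow S s (?N k) = spow S s c" if "k \<ge> k0" for k
  proof -
    have h: "?N k \<ge> i" "K dvd ?N k" "[?N k = 1] (mod p^a)" using k0[OF that] by auto
    have "[?N k = c] (mod p^a)" using h(3) c(3) by (meson cong_sym cong_trans)
    moreover have "[?N k = c] (mod K)" using h(2) c(2) by (metis cong_0_iff cong_sym cong_trans)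
    ultimately have "[?N k = c] (mod r)" using coprime_cong_mult_nat cop aK(1) by simp
    then show ?thesis using eqv h(1) c(1) by (simp add: cong_def)
  qed
  have pio: "pi_omega_pow (primes_except p) S s = spow S s c"
    unfolding pi_omega_pow_def
  proof (rule the_equality)
    show "\<forall>\<^sub>F k in sequentially. spow S s (?N k) = spow S s c"
      unfolding eventually_sequentially using Nc by blast
  next
    fix y assume "\<forall>\<^sub>F k in sequentially. spow S s (?N k) = y"
    then obtain k1 where "\<And>k. k \<ge> k1 \<Longrightarrow> spow S s (?N k) = y" unfolding eventually_sequentially by blast
    then show "y = spow S s c" using Nc[of "max k0 k1"] by fastforce
  qed
  have c1: "c \<ge> 1" using c(1) ir(1) by simp
  have pn1: "p^(n-1) \<ge> 1" using pn(1) by (simp add: prime_gt_0_nat Suc_leI)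
  have "spow S (pi_omega_pow (primes_except p) S s) (p^(n-1)) = spow S s (c * p^(n-1))"
    using pio spow_mult[OF S c1 pn1] by simp
  moreover have "c * p^(n-1) \<ge> i" using c(1) pn1 by (metis mult_le_mono mult_1_right)
  moreover have "i * r \<ge> i" using ir by simp
  ultimately have "spow S (pi_omega_pow (primes_except p) S s) (p^(n-1)) = omega_pow S s
      \<longleftrightarrow> r dvd c * p^(n-1)"
    using omega_eq eqv by (simp add: mod_eq_0_iff_dvd)
  also have "\<dots> \<longleftrightarrow> \<not> p^n dvd r"
  proof (cases "a < n")
    case True
    then have "p^a dvd p^(n-1)" by (simp add: le_imp_power_dvd)
    then have "p^a * K dvd p^(n-1) * c" using c(2) by (rule mult_dvd_mono)
    moreover have "\<not> p^n dvd r" using pn_dvd_iff[OF pn(1) aK(2) pn(2)] aK(1) True by simp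
    ultimately show ?thesis using aK(1) by (simp add: mult.commute)
  next
    case False
    have "\<not> r dvd c * p^(n-1)"
    proof
      assume "r dvd c * p^(n-1)"
      moreover have "p^n dvd r" using pn_dvd_iff[OF pn(1) aK(2) pn(2)] aK(1) False by simp
      ultimately have "p^(n-1) * p dvd p^(n-1) * c" using pn(2)
        by (metis dvd_trans mult.commute power_Suc2 Suc_diff_1 less_le_trans zero_less_one)
      then have pc: "p dvd c" using pn(1) by (simp add: prime_gt_0_nat)
      have "p dvd p^a" using False pn(2) by (simp add: dvd_power)
      then have "[c = 1] (mod p)" using c(3) cong_dvd_modulus_nat by blast
      then have "c mod p = 1" using prime_gt_1_nat[OF pn(1)] by (simp add: cong_def)
      then show False using pc by simp
    qed
    moreover have "p^n dvd r" using pn_dvd_iff[OF pn(1) aK(2) pn(2)] aK(1) False by simp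
    ultimately show ?thesis by simp
  qed
  finally show ?thesis .
qed

end

definition Good :: "nat \<Rightarrow> nat \<Rightarrow> sg set" where
  "Good p n = {T \<in> FinSG. \<forall>s\<in>car T. goodD p n T s}"

lemma elem_iff:
  assumes "fin_sg T" "s \<in> car T" "prime p" "n \<ge> 1"
  shows "spow T (pi_omega_pow (primes_except p) T s) (p^(n-1)) = omega_pow T s \<longleftrightarrow> goodD p n T s"
proof -
  obtain i r where ir: "i \<ge> 1" "r \<ge> 1"
    "\<forall>k l. k \<ge> i \<longrightarrow> l \<ge> i \<longrightarrow> (spow T s k = spow T s l \<longleftrightarrow> k mod r = l mod r)"
    using cyc_struct[OF assms(1,2)] by blast
  show ?thesis using pvcond_iff[OF assms(1,2) ir assms(3,4)] goodD_iff[OF assms(1,2) ir assms(3,4)] by simp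
qed

lemma pv_thm_eq_Good:
  assumes "prime p" "n \<ge> 1"
  shows "pv_thm_eq p n = Good p n"
  unfolding pv_thm_eq_def Good_def FinSG_def using elem_iff[OF _ _ assms] by auto

lemma funpow_zero: "((\<lambda>b::nat. 0::nat) ^^ k) 0 = 0" by (induction k) simp_all

lemma Zm_fin: "m \<ge> 1 \<Longrightarrow> Zm m \<in> FinSG"
  unfolding FinSG_def fin_sg_def Zm_def car_def mul_def
  apply simp
  apply (intro conjI ballI)
  apply simp_all
  by (metis mod_add_left_eq mod_add_right_eq add.assoc)

lemma spow_Zm: "a < m \<Longrightarrow> spow (Zm m) a (Suc j) = (Suc j * a) mod m"
proof (induction j)
  case 0 then show ?case by simp
next
  case (Suc j)
  then show ?case by (simp add: spow_SS Zm_def mod_add_right_eq add.commute)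
qed

lemma Zm_notgood:
  assumes "prime p" "n \<ge> 1"
  shows "\<not> goodD p n (Zm (p^n)) 1"
proof
  assume "goodD p n (Zm (p^n)) 1"
  then obtain i K where iK: "i \<ge> 1" "\<not> p dvd K" "spow (Zm (p^n)) 1 (i + p^(n-1)*K) = spow (Zm (p^n)) 1 i"
    unfolding goodD_def by blast
  have p1: "1 < p^n" using one_less_power[of p n] prime_gt_1_nat[OF assms(1)] assms(2) by simp
  have sp: "spow (Zm (p^n)) 1 k = k mod p^n" if "k \<ge> 1" for k
    using spow_Zm[OF p1, of "k - 1"] that by simp
  have "(i + p^(n-1)*K) mod p^n = i mod p^n" using iK(3) sp iK(1) by simp
  then have "p^n dvd p^(n-1)*K" using mod_eq_dvd_iff_nat[of i "i + p^(n-1)*K" "p^n"] by simp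
  then have "p^(n-1) * p dvd p^(n-1) * K" using assms(2) by (metis Suc_diff_1 less_le_trans zero_less_one power_Suc2)
  then have "p dvd K" using assms(1) by (simp add: prime_gt_0_nat)
  then show False using iK(2) by simp
qed

lemma Good_pv:
  assumes "prime p" "n \<ge> 1"
  shows "pseudovariety (Good p n)"
  unfolding pseudovariety_def
proof (intro conjI ballI allI impI)
  show "Good p n \<subseteq> FinSG" unfolding Good_def by auto
next
  have "Zm 1 \<in> Good p n"
  proof -
    have "goodD p n (Zm 1) s" if "s \<in> car (Zm 1)" for s
    proof -
      have s0: "s = 0" "s < 1" using that by (auto simp: Zm_def car_def)
      have "spow (Zm 1) s (1 + p^(n-1)*1) = spow (Zm 1) s 1"
        unfolding spow_def Zm_def mul_pair using s0(1) funpow_zero by simp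
      moreover have "\<not> p dvd 1" using assms(1) by (metis not_prime_1 nat_dvd_1_iff_1)
      ultimately show ?thesis unfolding goodD_def by (intro exI[of _ 1] exI[of _ 1]) simp
    qed
    then show ?thesis unfolding Good_def using Zm_fin[of 1] by auto
  qed
  then show "Good p n \<noteq> {}" by blast
next
  fix S T assume ST: "S \<in> Good p n" "T \<in> Good p n"
  then have fS: "fin_sg S" and fT: "fin_sg T" unfolding Good_def FinSG_def by auto
  have carP: "car (sg_prod S T) = (\<lambda>(a,b). prod_encode (a,b)) ` (car S \<times> car T)"
    by (simp add: sg_prod_def car_def)
  have fin: "fin_sg (sg_prod S T)"
    unfolding fin_sg_def
  proof (intro conjI ballI)
    show "finite (car (sg_prod S T))" using carP fin_sgD(1)[OF fS] fin_sgD(1)[OF fT] by simp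
    show "car (sg_prod S T) \<noteq> {}" using carP fin_sgD(2)[OF fS] fin_sgD(2)[OF fT] by simp
  next
    fix x y assume "x \<in> car (sg_prod S T)" "y \<in> car (sg_prod S T)"
    then obtain a b c d where "x = prod_encode (a,b)" "y = prod_encode (c,d)"
      "a \<in> car S" "b \<in> car T" "c \<in> car S" "d \<in> car T" using carP by auto
    then show "mul (sg_prod S T) x y \<in> car (sg_prod S T)"
      using carP mul_prod fin_sgD(3)[OF fS] fin_sgD(3)[OF fT] by auto
  next
    fix x y z assume "x \<in> car (sg_prod S T)" "y \<in> car (sg_prod S T)" "z \<in> car (sg_prod S T)"
    then obtain a b c d e g where "x = prod_encode (a,b)" "y = prod_encode (c,d)" "z = prod_encode (e,g)"
      "a \<in> car S" "b \<in> car T" "c \<in> car S" "d \<in> car T" "e \<in> car S" "g \<in> car T" using carP by auto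
    then show "mul (sg_prod S T) (mul (sg_prod S T) x y) z = mul (sg_prod S T) x (mul (sg_prod S T) y z)"
      using mul_prod fin_sgD(4)[OF fS] fin_sgD(4)[OF fT] by simp
  qed
  have "goodD p n (sg_prod S T) x" if xin: "x \<in> car (sg_prod S T)" for x
  proof -
    obtain a b where ab: "x = prod_encode (a,b)" "a \<in> car S" "b \<in> car T" using xin carP by auto
    obtain i1 K1 where 1: "i1 \<ge> 1" "\<not> p dvd K1" "spow S a (i1 + p^(n-1)*K1) = spow S a i1"
      using ST(1) ab(2) unfolding Good_def goodD_def by blast
    obtain i2 K2 where 2: "i2 \<ge> 1" "\<not> p dvd K2" "spow T b (i2 + p^(n-1)*K2) = spow T b i2"
      using ST(2) ab(3) unfolding Good_def goodD_def by blast
    define i where "i = max i1 i2"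
    have "spow S a (i + K2 * (p^(n-1)*K1)) = spow S a i"
      by (rule periodic[OF fS ab(2) 1(1) 1(3)]) (simp add: i_def)
    moreover have "spow T b (i + K1 * (p^(n-1)*K2)) = spow T b i"
      by (rule periodic[OF fT ab(3) 2(1) 2(3)]) (simp add: i_def)
    ultimately have "spow (sg_prod S T) x (i + p^(n-1)*(K1*K2)) = spow (sg_prod S T) x i"
      using ab(1) spow_prod by (simp add: algebra_simps)
    moreover have "\<not> p dvd K1 * K2" using 1(2) 2(2) assms(1) by (simp add: prime_dvd_mult_iff)
    moreover have "i \<ge> 1" using 1(1) i_def by simp
    ultimately show ?thesis unfolding goodD_def by blast
  qed
  then show "sg_prod S T \<in> Good p n" using fin unfolding Good_def FinSG_def by auto
next
  fix S A assume S: "S \<in> Good p n" and A: "A \<subseteq> car S \<and> A \<noteq> {} \<and> (\<forall>x\<in>A. \<forall>y\<in>A. mul S x y \<in> A)"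
  then have fS: "fin_sg S" unfolding Good_def FinSG_def by auto
  have "fin_sg (A, mul S)"
    unfolding fin_sg_def car_pair mul_pair
  proof (intro conjI ballI)
    show "finite A" using A fin_sgD(1)[OF fS] finite_subset by blast
    show "A \<noteq> {}" using A by blast
    fix x y assume "x \<in> A" "y \<in> A" then show "mul S x y \<in> A" using A by blast
  next
    fix x y z assume "x \<in> A" "y \<in> A" "z \<in> A" then show "mul S (mul S x y) z = mul S x (mul S y z)"
      using A fin_sgD(4)[OF fS] by blast
  qed
  moreover have "goodD p n (A, mul S) s" if "s \<in> A" for s
    using S that A unfolding Good_def goodD_def by (auto simp: spow_sub)
  ultimately show "(A, mul S) \<in> Good p n" unfolding Good_def FinSG_def by auto
next
  fix S T assume S: "S \<in> Good p n" and T: "T \<in> FinSG" and "\<exists>f. is_hom_onto f S T"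
  then obtain f where f: "is_hom_onto f S T" by blast
  have fS: "fin_sg S" using S unfolding Good_def FinSG_def by auto
  have "goodD p n T t" if tin: "t \<in> car T" for t
  proof -
    obtain s where s: "s \<in> car S" "t = f s" using f tin unfolding is_hom_onto_def by (metis imageE)
    obtain i K where iK: "i \<ge> 1" "\<not> p dvd K" "spow S s (i + p^(n-1)*K) = spow S s i"
      using S s(1) unfolding Good_def goodD_def by blast
    have "spow T t (i + p^(n-1)*K) = spow T t i"
      using spow_hom[OF fS s(1) f] iK(3) s(2) by metis
    then show ?thesis unfolding goodD_def using iK by blast
  qed
  then show "T \<in> Good p n" using T unfolding Good_def by auto
qed

lemma Zm_notin:
  assumes "prime p" "n \<ge> 1"
  shows "Zm (p^n) \<notin> Good p n"
proof -
  have "1 < p^n" using one_less_power[of p n] prime_gt_1_nat[OF assms(1)] assms(2) by simp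
  then have "1 \<in> car (Zm (p^n))" by (simp add: Zm_def car_def)
  then show ?thesis using Zm_notgood[OF assms] unfolding Good_def by auto
qed

lemma bad_gen:
  assumes "fin_sg T" "s \<in> car T" "\<not> goodD p n T s" "prime p" "n \<ge> 1"
  shows "Zm (p^n) \<in> pv_gen {T}"
proof -
  obtain i r where ir: "i \<ge> 1" "r \<ge> 1"
    "\<forall>k l. k \<ge> i \<longrightarrow> l \<ge> i \<longrightarrow> (spow T s k = spow T s l \<longleftrightarrow> k mod r = l mod r)"
    using cyc_struct[OF assms(1,2)] by blast
  have "p^n dvd r" using goodD_iff[OF assms(1,2) ir assms(4,5)] assms(3) by simp
  then obtain A f where Af: "A \<subseteq> car T" "A \<noteq> {}" "\<forall>x\<in>A. \<forall>y\<in>A. mul T x y \<in> A"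
     "is_hom_onto f (A, mul T) (Zm (p^n))"
    using hom_construct[OF assms(1,2) ir assms(4,5)] by blast
  have Z: "Zm (p^n) \<in> FinSG" using Zm_fin assms(4) prime_gt_0_nat by (simp add: Suc_leI)
  show ?thesis unfolding pv_gen_def
  proof
    fix V assume "V \<in> {V. pseudovariety V \<and> {T} \<subseteq> V}"
    then have V: "pseudovariety V" "T \<in> V" by auto
    then have "(A, mul T) \<in> V" using Af unfolding pseudovariety_def by blast
    then show "Zm (p^n) \<in> V" using V(1) Af(4) Z unfolding pseudovariety_def by blast
  qed
qed

lemma gen_sub: "pseudovariety V \<Longrightarrow> C \<subseteq> V \<Longrightarrow> pv_gen C \<subseteq> V"
  unfolding pv_gen_def by auto

lemma gen_in: "x \<in> C \<Longrightarrow> x \<in> pv_gen C"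
  unfolding pv_gen_def by auto

lemma Excl_eq:
  assumes "prime p" "n \<ge> 1"
  shows "Excl (Zm (p^n)) = Good p n"
proof
  show "Good p n \<subseteq> Excl (Zm (p^n))"
  proof
    fix T assume T: "T \<in> Good p n"
    then have "pv_gen {T} \<subseteq> Good p n" using gen_sub Good_pv[OF assms] by blast
    then have "Zm (p^n) \<notin> pv_gen {T}" using Zm_notin[OF assms] by blast
    then show "T \<in> Excl (Zm (p^n))" using T unfolding Excl_def Good_def by auto
  qed
next
  show "Excl (Zm (p^n)) \<subseteq> Good p n"
  proof
    fix T assume T: "T \<in> Excl (Zm (p^n))"
    then have fT: "fin_sg T" "Zm (p^n) \<notin> pv_gen {T}" unfolding Excl_def FinSG_def by auto
    have "goodD p n T s" if "s \<in> car T" for s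
      using bad_gen[OF fT(1) that _ assms] fT(2) by blast
    then show "T \<in> Good p n" using fT(1) unfolding Good_def FinSG_def by auto
  qed
qed

theorem theorem5p3:
  fixes p n :: nat
  assumes "prime p" and "n \<ge> 1"
  shows "join_irreducible (pv_gen {Zm (p ^ n)})
         \<and> Excl (Zm (p ^ n)) = pv_thm_eq p n"
proof
  show "Excl (Zm (p ^ n)) = pv_thm_eq p n"
    using Excl_eq[OF assms] pv_thm_eq_Good[OF assms] by simp
next
  show "join_irreducible (pv_gen {Zm (p ^ n)})"
    unfolding join_irreducible_def
  proof (intro allI impI)
    fix X assume X: "\<forall>W\<in>X. pseudovariety W" and sub: "pv_gen {Zm (p ^ n)} \<subseteq> pv_join X"
    show "\<exists>W\<in>X. pv_gen {Zm (p ^ n)} \<subseteq> W"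
    proof (rule ccontr)
      assume no: "\<not> (\<exists>W\<in>X. pv_gen {Zm (p ^ n)} \<subseteq> W)"
      have "\<Union>X \<subseteq> Good p n"
      proof
        fix T assume "T \<in> \<Union>X"
        then obtain W where W: "W \<in> X" "T \<in> W" by blast
        have pW: "pseudovariety W" using X W(1) by blast
        have "Zm (p^n) \<notin> W"
        proof
          assume "Zm (p^n) \<in> W"
          then have "pv_gen {Zm (p^n)} \<subseteq> W" using gen_sub[OF pW, of "{Zm (p^n)}"] by simp
          then show False using no W(1) by blast
        qed
        moreover have "pv_gen {T} \<subseteq> W" using gen_sub[OF pW, of "{T}"] W(2) by simp
        moreover have "T \<in> FinSG" using pW W(2) unfolding pseudovariety_def by auto
        ultimately have "T \<in> Excl (Zm (p^n))" unfolding Excl_def by auto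
        then show "T \<in> Good p n" using Excl_eq[OF assms] by simp
      qed
      then have "pv_join X \<subseteq> Good p n" unfolding pv_join_def by (rule gen_sub[OF Good_pv[OF assms]])
      moreover have "Zm (p^n) \<in> pv_join X" using sub gen_in[of "Zm (p^n)" "{Zm (p^n)}"] by auto
      ultimately show False using Zm_notin[OF assms] by blast
    qed
  qed
qed

end
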